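(* Let $k\geq2$, $n$, $r$ be positive integers with $r<\frac{(k-1)n}{k}$. Let $\sigma$ be a cyclic order on $[n]$, and let $\mathcal{F}$ be a $k$-wise intersecting family of $\sigma$-intervals of length $r$. If $|\mathcal{F}|=r$, then there is a point $x$ such that $\mathcal{F}$ consists of all $\sigma$-intervals of length $r$ containing $x$.
   Context: A cyclic order on $[n]$ is a permutation $\sigma=(\sigma(1),\dots,\sigma(n))$ of $[n]$ considered up to cyclic rotation. For $x\in[n]$, the $\sigma$-interval of length $r$ starting at $x$ is $\{\sigma(x),\sigma(x+1),\dots,\sigma(x+r-1)\}$, with indices taken modulo $n$ (in $[n]$). A family $\mathcal{F}$ is $k$-wise intersecting if $F_1\cap\cdots\cap F_k\neq\emptyset$ for all $F_1,\dots,F_k\in\mathcal{F}$. *)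

theory Defs
  imports Complex_Main
begin

text \<open>A cyclic order on [n] = {1..n} is represented by a permutation sigma of {1..n};
  rotation does not change the set of sigma-intervals.\<close>

definition cyclic_order :: "nat \<Rightarrow> (nat \<Rightarrow> nat) \<Rightarrow> bool" where
  "cyclic_order n \<sigma> \<longleftrightarrow> bij_betw \<sigma> {1..n} {1..n}"

definition sigma_interval :: "nat \<Rightarrow> (nat \<Rightarrow> nat) \<Rightarrow> nat \<Rightarrow> nat \<Rightarrow> nat set" where
  "sigma_interval n \<sigma> r x = {\<sigma> (((x + i - 1) mod n) + 1) | i. i < r}"

definition sigma_intervals :: "nat \<Rightarrow> (nat \<Rightarrow> nat) \<Rightarrow> nat \<Rightarrow> nat set set" where
  "sigma_intervals n \<sigma> r = {sigma_interval n \<sigma> r x | x. x \<in> {1..n}}"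

definition k_wise_intersecting :: "nat \<Rightarrow> 'a set set \<Rightarrow> bool" where
  "k_wise_intersecting k \<F> \<longleftrightarrow>
     (\<forall>Fs :: nat \<Rightarrow> 'a set. (\<forall>i<k. Fs i \<in> \<F>) \<longrightarrow> (\<Inter>i<k. Fs i) \<noteq> {})"

end

theory Submission
  imports Defs
begin

lemma find_step:
  fixes x :: "nat \<Rightarrow> int"
  assumes "x 0 \<le> q" "q < x k"
  shows "\<exists>i<k. x i \<le> q \<and> q < x (Suc i)"
  using assms
proof (induction k)
  case 0 then show ?case by simp
next
  case (Suc k)
  show ?case
  proof (cases "q < x k")
    case True
    then obtain i where "i<k" "x i \<le> q" "q < x (Suc i)" using Suc by auto
    then show ?thesis by (intro exI[of _ i]) auto
  next
    case False
    then show ?thesis using Suc.prems by (intro exI[of _ k]) auto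
  qed
qed

lemma no_common:
  fixes x :: "nat \<Rightarrow> int" and N R G p :: int
  assumes "0 < R" "R < N" "G = N - R" "0 < k"
    and step: "\<And>i. i < k \<Longrightarrow> x (Suc i) \<le> x i + G"
    and wrap: "x k \<ge> x 0 + N"
    and good: "\<And>i. i < k \<Longrightarrow> (p - x i) mod N < R"
  shows False
proof -
  define q where "q = x 0 + (p - x 0) mod N"
  have q0: "x 0 \<le> q" using assms by (simp add: q_def)
  have qG: "q + G < x 0 + N" using good[OF \<open>0<k\<close>] assms by (simp add: q_def)
  have "q < x k" using qG wrap assms by linarith
  then obtain i where i: "i<k" "x i \<le> q" "q < x (Suc i)" using find_step[of x q k] q0 by blast
  have up: "x (Suc i) \<le> q + G" using step[OF i(1)] i by linarith
  show False
  proof (cases "Suc i < k")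
    case True
    have "(p - x (Suc i)) mod N = ((p - x 0) mod N + (x 0 - x (Suc i))) mod N"
      by (simp add: mod_add_left_eq)
    also have "\<dots> = (q - x (Suc i)) mod N" by (simp add: q_def algebra_simps)
    also have "\<dots> = (q - x (Suc i) + N) mod N" by simp
    also have "\<dots> = q - x (Suc i) + N"
      using i up assms by (intro mod_pos_pos_trivial) auto
    finally have "(p - x (Suc i)) mod N \<ge> R" using up assms by linarith
    with good[OF True] show False by linarith
  next
    case False
    then have "Suc i = k" using i by simp
    then show False using up qG wrap by auto
  qed
qed


lemma dvd_small:
  fixes N z :: int
  assumes "0 < N" "N dvd z" "\<bar>z\<bar> < N" shows "z = 0"
proof (rule ccontr)
  assume "z \<noteq> 0"
  then have "\<bar>N\<bar> \<le> \<bar>z\<bar>" using dvd_imp_le_int assms(2) by blast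
  then show False using assms by simp
qed

lemma mod_neg_small:
  fixes N z :: int
  assumes "-N \<le> z" "z < 0" shows "z mod N = z + N"
proof -
  have "z mod N = (z + N) mod N" by simp
  also have "\<dots> = z + N" using assms by (intro mod_pos_pos_trivial) auto
  finally show ?thesis .
qed

lemma window:
  fixes N R G c :: int and S :: "int set"
  assumes "0<R" "R<N" "G = N-R" "S \<subseteq> {0..<N}" "card S = nat R"
    and w: "\<forall>j. c < j \<and> j \<le> c + G \<longrightarrow> j mod N \<notin> S"
  shows "S = {y \<in> {0..<N}. (c - y) mod N < R}"
proof -
  define T where "T = (\<lambda>j. j mod N) ` {c<..c+G}"
  have inj: "inj_on (\<lambda>j. j mod N) {c<..c+G}"
  proof (rule inj_onI)
    fix j j' assume j: "j \<in> {c<..c+G}" "j' \<in> {c<..c+G}" "j mod N = j' mod N"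
    then have "N dvd j - j'" by (simp add: mod_eq_dvd_iff)
    moreover have "\<bar>j - j'\<bar> < N" using j assms by auto
    ultimately have "j - j' = 0" using dvd_small[of N "j - j'"] assms by linarith
    then show "j = j'" by simp
  qed
  have cT: "card T = nat G" unfolding T_def using card_image[OF inj] by simp
  have sub: "T \<subseteq> {0..<N} - S" unfolding T_def using w assms by auto
  have fin: "finite ({0..<N} - S)" by simp
  have "card ({0..<N} - S) = card {0..<N} - card S"
    using assms by (intro card_Diff_subset) (auto intro: finite_subset)
  then have "card ({0..<N} - S) = nat G" using assms by simp
  then have TE: "T = {0..<N} - S" using card_subset_eq[OF fin sub] cT by metis
  have mem: "y \<in> T \<longleftrightarrow> R \<le> (c - y) mod N" if y: "y \<in> {0..<N}" for y
  proof
    assume "y \<in> T"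
    then obtain j where j: "j \<in> {c<..c+G}" "y = j mod N" unfolding T_def by auto
    have "(c - y) mod N = (c - j) mod N" using j(2) by (simp add: mod_diff_right_eq)
    also have "\<dots> = c - j + N" using j assms by (intro mod_neg_small) auto
    finally show "R \<le> (c - y) mod N" using j assms by auto
  next
    assume d: "R \<le> (c - y) mod N"
    define j where "j = c - (c - y) mod N + N"
    have dN: "(c - y) mod N < N" using assms by simp
    have jr: "j \<in> {c<..c+G}" using d dN assms by (auto simp: j_def)
    have "j - y = N * ((c - y) div N) + N"
      unfolding j_def using div_mult_mod_eq[of "c-y" N] by (simp add: algebra_simps)
    then have "N dvd j - y" by simp
    then have "j mod N = y mod N" by (simp add: mod_eq_dvd_iff)
    also have "\<dots> = y" using y by simp
    finally have "y = j mod N" by simp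
    then show "y \<in> T" unfolding T_def using jr by blast
  qed
  show ?thesis
  proof (intro set_eqI iffI)
    fix y assume "y \<in> S"
    then have "y \<in> {0..<N}" "y \<notin> T" using assms TE by auto
    then show "y \<in> {y \<in> {0..<N}. (c - y) mod N < R}" using mem[of y] by simp
  next
    fix y assume "y \<in> {y \<in> {0..<N}. (c - y) mod N < R}"
    then show "y \<in> S" using mem[of y] TE by auto
  qed
qed


definition nxt :: "int \<Rightarrow> int \<Rightarrow> int set \<Rightarrow> int \<Rightarrow> int" where
  "nxt N G S x = Max {j. x < j \<and> j \<le> x + G \<and> j mod N \<in> S}"

lemma nxt_props:
  assumes H: "\<forall>c. \<exists>j. c < j \<and> j \<le> c + G \<and> j mod N \<in> S"
  shows "x < nxt N G S x" "nxt N G S x \<le> x + G" "nxt N G S x mod N \<in> S"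
    "\<And>j. nxt N G S x < j \<Longrightarrow> j \<le> x + G \<Longrightarrow> j mod N \<notin> S"
proof -
  define A where "A = {j. x < j \<and> j \<le> x + G \<and> j mod N \<in> S}"
  have fin: "finite A" unfolding A_def by (rule finite_subset[of _ "{x<..x+G}"]) auto
  have ne: "A \<noteq> {}" using H unfolding A_def by blast
  have mx: "Max A \<in> A" using Max_in[OF fin ne] .
  have nd: "nxt N G S x = Max A" unfolding nxt_def A_def by simp
  show "x < nxt N G S x" "nxt N G S x \<le> x + G" "nxt N G S x mod N \<in> S"
    using mx nd unfolding A_def by auto
  show "\<And>j. nxt N G S x < j \<Longrightarrow> j \<le> x + G \<Longrightarrow> j mod N \<notin> S"
  proof
    fix j assume j: "nxt N G S x < j" "j \<le> x + G" "j mod N \<in> S"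
    then have "j \<in> A" using mx nd unfolding A_def by auto
    then have "j \<le> Max A" using Max_ge[OF fin] by blast
    then show False using j nd by simp
  qed
qed

lemma nxt_shift:
  assumes H: "\<forall>c. \<exists>j. c < j \<and> j \<le> c + G \<and> j mod N \<in> S"
  shows "nxt N G S (x + N*c) = nxt N G S x + N*c"
proof -
  define A where "A = {j. x < j \<and> j \<le> x + G \<and> j mod N \<in> S}"
  have fin: "finite A" unfolding A_def by (rule finite_subset[of _ "{x<..x+G}"]) auto
  have ne: "A \<noteq> {}" using H unfolding A_def by blast
  have img: "{j. x + N*c < j \<and> j \<le> x + N*c + G \<and> j mod N \<in> S} = (\<lambda>j. j + N*c) ` A"
  proof (intro set_eqI iffI)
    fix j assume "j \<in> {j. x + N*c < j \<and> j \<le> x + N*c + G \<and> j mod N \<in> S}"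
    moreover have "(j - N*c) mod N = j mod N" using mod_mult_self1[of j "-c" N] by (simp add: algebra_simps)
    ultimately have "j - N*c \<in> A" unfolding A_def by auto
    then show "j \<in> (\<lambda>j. j + N*c) ` A" by (intro image_eqI[of _ _ "j - N*c"]) auto
  next
    fix j assume "j \<in> (\<lambda>j. j + N*c) ` A"
    then show "j \<in> {j. x + N*c < j \<and> j \<le> x + N*c + G \<and> j mod N \<in> S}"
      unfolding A_def by auto
  qed
  have mono: "mono (\<lambda>j::int. j + N*c)" by (rule monoI) simp
  have "nxt N G S (x + N*c) = Max ((\<lambda>j. j + N*c) ` A)" unfolding nxt_def img by simp
  also have "\<dots> = Max A + N*c" using mono_Max_commute[OF mono fin ne] by simp
  also have "\<dots> = nxt N G S x + N*c" unfolding nxt_def A_def by simp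
  finally show ?thesis .
qed

lemma funpow_shift:
  assumes H: "\<forall>c. \<exists>j. c < j \<and> j \<le> c + G \<and> j mod N \<in> S"
  shows "(nxt N G S ^^ s) (x + N*c) = (nxt N G S ^^ s) x + N*c"
  by (induction s) (simp_all add: nxt_shift[OF H])

lemma inj_mod_interval:
  fixes N a b :: int
  assumes "0 < N" "b - a \<le> N"
  shows "inj_on (\<lambda>j. j mod N) {a<..b}"
proof (rule inj_onI)
  fix j j' assume j: "j \<in> {a<..b}" "j' \<in> {a<..b}" "j mod N = j' mod N"
  then have d: "N dvd j - j'" by (simp add: mod_eq_dvd_iff)
  have "\<bar>j - j'\<bar> < N" using j assms by auto
  show "j = j'"
  proof (rule ccontr)
    assume "j \<noteq> j'"
    then have "\<bar>N\<bar> \<le> \<bar>j - j'\<bar>" using dvd_imp_le_int d by simp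
    then show False using \<open>\<bar>j - j'\<bar> < N\<close> assms by simp
  qed
qed


lemma nowindow_false:
  fixes N R G :: int and S :: "int set" and k :: nat
  assumes R0: "0<R" and RN: "R<N" and GD: "G=N-R" and SS: "S \<subseteq> {0..<N}" and cS: "card S = nat R"
    and kG: "N < int k * G"
    and H: "\<forall>c. \<exists>j. c < j \<and> j \<le> c + G \<and> j mod N \<in> S"
  obtains x :: "nat \<Rightarrow> int" where "\<And>i. x i mod N \<in> S" "\<And>i. x (Suc i) \<le> x i + G"
    "x k \<ge> x 0 + N"
proof -
  define f where "f = nxt N G S"
  note fp = nxt_props[OF H, folded f_def]
  have N0: "0 < N" using R0 RN by simp
  define u where "u t = (f ^^ t) (f 0)" for t
  have uS: "u t mod N \<in> S" for t by (cases t) (simp_all add: u_def fp)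
  have uSuc: "u (Suc t) = f (u t)" for t by (simp add: u_def)
  have uinc: "u t < u (Suc t)" for t using fp(1) uSuc by simp
  have umono: "strict_mono u" using uinc by (simp add: strict_mono_Suc_iff)
  have "\<not> inj_on (\<lambda>t. u t mod N) {0..nat N}"
  proof
    assume inj: "inj_on (\<lambda>t. u t mod N) {0..nat N}"
    have "(\<lambda>t. u t mod N) ` {0..nat N} \<subseteq> {0..<N}" using N0 by auto
    from card_inj_on_le[OF inj this] have "card {0..nat N} \<le> card {0..<N}" by simp
    then show False using N0 by simp
  qed
  then obtain a0 b0 where ab0: "a0 \<noteq> b0" "u a0 mod N = u b0 mod N"
    unfolding inj_on_def by blast
  have ex: "\<exists>b. \<exists>a<b. u a mod N = u b mod N"
  proof (cases "a0 < b0")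
    case True then show ?thesis using ab0 by blast
  next
    case False then have "b0 < a0" using ab0 by simp
    then show ?thesis using ab0 by metis
  qed
  define b where "b = (LEAST b. \<exists>a<b. u a mod N = u b mod N)"
  obtain a where ab: "a < b" "u a mod N = u b mod N"
    using LeastI_ex[OF ex] unfolding b_def[symmetric] by blast
  have dist: "u s mod N \<noteq> u s' mod N" if "s < s'" "s' < b" for s s'
  proof
    assume "u s mod N = u s' mod N"
    then have "\<exists>a<s'. u a mod N = u s' mod N" using that by blast
    then have "b \<le> s'" unfolding b_def by (rule Least_le)
    then show False using that by simp
  qed
  define m where "m = b - a"
  have m0: "0 < m" using ab by (simp add: m_def)
  define w where "w s = u (a + s)" for s
  have wf: "w s = (f ^^ s) (w 0)" for s
  proof -
    have "w s = (f ^^ (s + a)) (f 0)" by (simp add: w_def u_def add.commute)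
    then show ?thesis by (simp add: funpow_add w_def u_def)
  qed
  have wSuc: "w (Suc s) = f (w s)" for s by (simp add: w_def uSuc)
  have wS: "w s mod N \<in> S" for s by (simp add: w_def uS)
  have wm: "w m = u b" using ab by (simp add: w_def m_def)
  have "u b mod N = u a mod N" using ab by simp
  then have "N dvd w m - w 0" using wm by (simp add: w_def mod_eq_dvd_iff)
  then obtain W where W: "w m - w 0 = N * W" by (elim dvdE)
  have "w 0 < w m" using umono ab wm unfolding w_def strict_mono_def by simp
  then have "0 < N * W" using W by linarith
  then have W0: "0 < W" using N0 zero_less_mult_pos by blast
  have per: "w (s + m) = w s + N * W" for s
  proof -
    have "w (s + m) = (f ^^ s) ((f ^^ m) (w 0))" using wf[of "s+m"] by (simp add: funpow_add)
    also have "(f ^^ m) (w 0) = w 0 + N * W" using wf[of m] W by simp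
    also have "(f ^^ s) (w 0 + N * W) = w s + N * W" unfolding f_def using funpow_shift[OF H] wf[of s] f_def by simp
    finally show ?thesis .
  qed
  have wdist: "w (Suc s) mod N \<noteq> w (Suc s') mod N" if "s < m" "s' < m" "s \<noteq> s'" for s s'
  proof -
    have gen: "w (Suc s) mod N \<noteq> w (Suc s') mod N" if "s < s'" "s' < m" for s s'
    proof (cases "Suc s' = m")
      case True
      have "w (Suc s') mod N = u a mod N" using True wm ab by (simp add: w_def)
      moreover have "u a mod N \<noteq> u (a + Suc s) mod N" using dist[of a "a + Suc s"] that True m_def ab
        by simp
      ultimately show ?thesis by (simp add: w_def)
    next
      case False
      then show ?thesis using dist[of "a + Suc s" "a + Suc s'"] that m_def by (simp add: w_def)
    qed
    show ?thesis
    proof (cases "s < s'")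
      case True then show ?thesis using gen that by blast
    next
      case False then have "s' < s" using that by simp
      then show ?thesis using gen[of s' s] that by metis
    qed
  qed
  define D where "D s = {w (Suc s)<..w s + G}" for s
  define E where "E s = (\<lambda>j. j mod N) ` D s" for s
  have wstep: "w (Suc s) \<le> w s + G" for s using wSuc fp(2) by simp
  have Dnon: "j mod N \<notin> S" if "j \<in> D s" for j s
    using that fp(4)[of "w s"] wSuc unfolding D_def by auto
  have GN: "G < N" using GD R0 by simp
  have G0: "0 < G"
  proof (rule ccontr)
    assume "\<not> 0 < G"
    then have "int k * G \<le> 0" by (simp add: mult_nonneg_nonpos)
    then show False using kG N0 by linarith
  qed
  have cardE: "card (E s) = nat (w s + G - w (Suc s))" for s
  proof -
    have "inj_on (\<lambda>j. j mod N) (D s)" unfolding D_def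
      using inj_mod_interval[OF N0] fp(1)[of "w s"] wSuc GN by simp
    then have "card (E s) = card (D s)" unfolding E_def by (rule card_image)
    then show ?thesis by (simp add: D_def)
  qed
  have Esub: "E s \<subseteq> {0..<N} - S" for s unfolding E_def using Dnon N0 by auto
  have Edisj: "E s \<inter> E s' = {}" if "s < m" "s' < m" "s \<noteq> s'" for s s'
  proof (rule ccontr)
    assume "E s \<inter> E s' \<noteq> {}"
    then obtain j j' where jj: "j \<in> D s" "j' \<in> D s'" "j mod N = j' mod N"
      unfolding E_def by blast
    then obtain c where c: "j' - j = N * c" using mod_eq_dvd_iff[of j' N j] by (metis dvdE)
    define \<alpha> where "\<alpha> = w (Suc s)"
    define \<beta> where "\<beta> = w (Suc s') - N * c"
    have bmod: "\<beta> mod N = w (Suc s') mod N"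
      unfolding \<beta>_def using mod_mult_self1[of "w (Suc s')" "-c" N] by (simp add: algebra_simps)
    have aS: "\<alpha> mod N \<in> S" using wS \<alpha>_def by simp
    have bS: "\<beta> mod N \<in> S" using wS bmod by simp
    have ja: "\<alpha> < j" "j \<le> w s + G" using jj unfolding D_def \<alpha>_def by auto
    have jb: "\<beta> < j" "j \<le> w s' + G - N * c" using jj c unfolding D_def \<beta>_def by auto
    have "\<alpha> = \<beta>"
    proof (rule ccontr)
      assume ne: "\<alpha> \<noteq> \<beta>"
      show False
      proof (cases "\<alpha> < \<beta>")
        case True
        then have "\<beta> \<in> D s" using ja jb unfolding D_def \<alpha>_def by auto
        then show False using Dnon bS by blast
      next
        case False
        then have "\<beta> < \<alpha>" using ne by simp
        then have "\<alpha> + N * c \<in> D s'" using ja jb unfolding D_def \<beta>_def by auto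
        moreover have "(\<alpha> + N * c) mod N = \<alpha> mod N"
          using mod_mult_self1[of \<alpha> c N] by (simp add: algebra_simps)
        ultimately show False using Dnon aS by metis
      qed
    qed
    then have "w (Suc s) mod N = w (Suc s') mod N" using bmod \<alpha>_def by simp
    then show False using wdist that by blast
  qed
  have "card (\<Union>s<m. E s) = (\<Sum>s<m. card (E s))"
  proof (rule card_UN_disjoint)
    show "finite {..<m}" by simp
    show "\<forall>i\<in>{..<m}. finite (E i)" by (simp add: E_def D_def)
    show "\<forall>i\<in>{..<m}. \<forall>j\<in>{..<m}. i \<noteq> j \<longrightarrow> E i \<inter> E j = {}" using Edisj by blast
  qed
  moreover have "card (\<Union>s<m. E s) \<le> card ({0..<N} - S)"
    by (rule card_mono) (use Esub in auto)
  moreover have "card ({0..<N} - S) = nat G"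
  proof -
    have "card ({0..<N} - S) = card {0..<N} - card S"
      using SS by (intro card_Diff_subset) (auto intro: finite_subset)
    then show ?thesis using cS GD R0 RN by simp
  qed
  ultimately have sumle: "(\<Sum>s<m. nat (w s + G - w (Suc s))) \<le> nat G" using cardE by simp
  have "(\<Sum>s<m. w s + G - w (Suc s)) = int (\<Sum>s<m. nat (w s + G - w (Suc s)))"
    using wstep by (simp add: of_nat_sum)
  also have "\<dots> \<le> int (nat G)" using sumle by (simp only: of_nat_le_iff)
  also have "\<dots> = G" using G0 by simp
  finally have L: "(\<Sum>s<m. w s + G - w (Suc s)) \<le> G" .
  have "(\<Sum>s<m. w s + G - w (Suc s)) = int m * G - (\<Sum>s<m. w (Suc s) - w s)"
    by (simp add: sum.distrib sum_subtractf algebra_simps)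
  also have "(\<Sum>s<m. w (Suc s) - w s) = w m - w 0" by (rule sum_lessThan_telescope)
  finally have "int m * G - N * W \<le> G" using L W by simp
  then have mG: "int m * G \<le> N * W + G" by simp
  have "N * W < int k * G * W" using kG W0 by simp
  then have "int m * G < (int k * W + 1) * G" using mG by (simp add: algebra_simps)
  then have "int m < int k * W + 1" using G0 mult_less_cancel_right_pos by blast
  then have mkW: "int m \<le> int k * W" by linarith
  have tel: "w (t + k) - w t = (\<Sum>j<k. w (t + Suc j) - w (t + j))" for t
    using sum_lessThan_telescope[of "\<lambda>j. w (t + j)" k] by simp
  have "(\<Sum>t<m. w (t + k) - w t) = (\<Sum>t<m. \<Sum>j<k. w (t + Suc j) - w (t + j))"
    using tel by simp
  also have "\<dots> = (\<Sum>j<k. \<Sum>t<m. w (t + Suc j) - w (t + j))" by (rule sum.swap)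
  also have "\<dots> = (\<Sum>j<k. N * W)"
  proof (rule sum.cong)
    fix j assume "j \<in> {..<k}"
    have "(\<Sum>t<m. w (t + Suc j) - w (t + j)) = (\<Sum>t<m. w (j + Suc t) - w (j + t))"
      by (simp add: add.commute)
    also have "\<dots> = w (j + m) - w (j + 0)" by (rule sum_lessThan_telescope[of "\<lambda>t. w (j + t)"])
    also have "\<dots> = N * W" using per[of j] by simp
    finally show "(\<Sum>t<m. w (t + Suc j) - w (t + j)) = N * W" .
  qed simp
  finally have avg: "(\<Sum>t<m. w (t + k) - w t) = int k * (N * W)" by simp
  have "\<exists>t<m. w (t + k) - w t \<ge> N"
  proof (rule ccontr)
    assume "\<not> ?thesis"
    then have lt: "\<And>t. t \<in> {..<m} \<Longrightarrow> w (t + k) - w t < N" by auto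
    have "(\<Sum>t<m. w (t + k) - w t) < (\<Sum>t<m. N)"
      using m0 by (intro sum_strict_mono) (auto intro: lt)
    also have "\<dots> = int m * N" by simp
    also have "\<dots> \<le> int k * W * N" using mkW N0 by (intro mult_right_mono) auto
    finally show False using avg by (simp add: algebra_simps)
  qed
  then obtain t where t: "t < m" "w (t + k) - w t \<ge> N" by blast
  show ?thesis
  proof (rule that[of "\<lambda>i. w (t + i)"])
    show "\<And>i. w (t + i) mod N \<in> S" using wS by simp
    show "\<And>i. w (t + Suc i) \<le> w (t + i) + G" using wstep by simp
    show "w (t + k) \<ge> w (t + 0) + N" using t by simp
  qed
qed


lemma core:
  fixes N R :: int and S :: "int set" and k :: nat
  assumes R0: "0<R" and RN: "R<N" and SS: "S \<subseteq> {0..<N}" and cS: "card S = nat R"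
    and kG: "N < int k * (N - R)"
    and kw: "\<And>x. (\<forall>i<k. x i mod N \<in> S) \<Longrightarrow> \<exists>p. \<forall>i<k. (p - x i) mod N < R"
  shows "\<exists>p. S = {y \<in> {0..<N}. (p - y) mod N < R}"
proof (cases "\<exists>c. \<forall>j. c < j \<and> j \<le> c + (N - R) \<longrightarrow> j mod N \<notin> S")
  case True
  then obtain c where "\<forall>j. c < j \<and> j \<le> c + (N - R) \<longrightarrow> j mod N \<notin> S" by blast
  then show ?thesis using window[OF R0 RN refl SS cS] by blast
next
  case False
  then have H: "\<forall>c. \<exists>j. c < j \<and> j \<le> c + (N - R) \<and> j mod N \<in> S" by blast
  obtain x :: "nat \<Rightarrow> int" where x: "\<And>i. x i mod N \<in> S" "\<And>i. x (Suc i) \<le> x i + (N - R)"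
    "x k \<ge> x 0 + N"
    using nowindow_false[OF R0 RN refl SS cS kG H] by blast
  obtain p where p: "\<forall>i<k. (p - x i) mod N < R" using kw x(1) by blast
  have "0 < k" using kG R0 RN by (cases k) auto
  have False
    by (rule no_common[OF R0 RN refl \<open>0<k\<close>, of x p]) (use x p in auto)
  then show ?thesis ..
qed


lemma si_mem:
  fixes n r :: nat and y :: int
  assumes n0: "0 < n" and rn: "r < n" and y: "y \<in> {0..<int n}"
  shows "q \<in> sigma_interval n \<sigma> r (nat y + 1) \<longleftrightarrow>
    (\<exists>p \<in> {0..<int n}. q = \<sigma> (nat p + 1) \<and> (p - y) mod int n < int r)"
proof
  assume "q \<in> sigma_interval n \<sigma> r (nat y + 1)"
  then obtain i where i: "i < r" "q = \<sigma> (((nat y + 1 + i - 1) mod n) + 1)"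
    unfolding sigma_interval_def by blast
  define p where "p = int ((nat y + i) mod n)"
  have p1: "p = (y + int i) mod int n" unfolding p_def using y by (simp add: zmod_int)
  have "p \<in> {0..<int n}" unfolding p_def using n0 by simp
  moreover have "q = \<sigma> (nat p + 1)" using i by (simp add: p_def)
  moreover have "(p - y) mod int n = int i"
  proof -
    have "(p - y) mod int n = ((y + int i) - y) mod int n" unfolding p1 by (simp add: mod_diff_left_eq)
    also have "\<dots> = int i" using i rn by simp
    finally show ?thesis .
  qed
  ultimately show "\<exists>p \<in> {0..<int n}. q = \<sigma> (nat p + 1) \<and> (p - y) mod int n < int r"
    using i by auto
next
  assume "\<exists>p \<in> {0..<int n}. q = \<sigma> (nat p + 1) \<and> (p - y) mod int n < int r"
  then obtain p where p: "p \<in> {0..<int n}" "q = \<sigma> (nat p + 1)" "(p - y) mod int n < int r" by blast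
  define i where "i = nat ((p - y) mod int n)"
  have "0 \<le> (p - y) mod int n" using n0 by simp
  then have ir: "i < r" using p(3) unfolding i_def by linarith
  have "int ((nat y + i) mod n) = (y + (p - y) mod int n) mod int n"
    using y n0 by (simp add: i_def zmod_int)
  also have "\<dots> = p mod int n" by (simp add: mod_add_right_eq)
  also have "\<dots> = p" using p by simp
  finally have "(nat y + i) mod n = nat p" by linarith
  then have "q = \<sigma> (((nat y + 1 + i - 1) mod n) + 1)" using p by simp
  then show "q \<in> sigma_interval n \<sigma> r (nat y + 1)" unfolding sigma_interval_def using ir by blast
qed

theorem lemma2p2:
  fixes k n r :: nat and \<sigma> :: "nat \<Rightarrow> nat" and \<F> :: "nat set set"
  assumes "k \<ge> 2" and "n > 0" and "r > 0"
    and "real r < real ((k - 1) * n) / real k"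
    and "cyclic_order n \<sigma>"
    and "\<F> \<subseteq> sigma_intervals n \<sigma> r"
    and "k_wise_intersecting k \<F>"
    and "card \<F> = r"
  shows "\<exists>x\<in>{1..n}. \<F> = {I \<in> sigma_intervals n \<sigma> r. x \<in> I}"
proof -
  note k2 = assms(1) and n0 = assms(2) and r0 = assms(3) and ineq = assms(4)
    and cyc = assms(5) and Fsub = assms(6) and kwi = assms(7) and cF = assms(8)
  define N where "N = int n"
  define R where "R = int r"
  have "real r * real k < real ((k - 1) * n)" using ineq k2 by (simp add: pos_less_divide_eq)
  then have "real (r * k) < real ((k - 1) * n)" by simp
  then have rk: "r * k < (k - 1) * n" by (simp only: of_nat_less_iff)
  then have "int (r * k) < int ((k - 1) * n)" by (simp only: of_nat_less_iff)
  moreover have "int (k - 1) = int k - 1" using k2 by (simp add: of_nat_diff)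
  ultimately have ineqZ: "int r * int k < (int k - 1) * int n" by (simp only: of_nat_mult)
  have rn: "r < n"
  proof (rule ccontr)
    assume "\<not> r < n"
    then have "(k - 1) * n \<le> k * r" by (intro mult_mono) auto
    then show False using rk by (simp add: mult.commute)
  qed
  have e1: "int k * (int n - int r) = int k * int n - int r * int k" by (simp add: algebra_simps)
  have e2: "(int k - 1) * int n = int k * int n - int n" by (simp add: algebra_simps)
  have kG: "N < int k * (N - R)" unfolding N_def R_def e1 using ineqZ e2 by linarith
  define SI where "SI y = sigma_interval n \<sigma> r (nat y + 1)" for y :: int
  define \<tau> where "\<tau> p = \<sigma> (nat p + 1)" for p :: int
  have injs: "inj_on \<sigma> {1..n}" using cyc unfolding cyclic_order_def by (rule bij_betw_imp_inj_on)
  have \<tau>inj: "p = p'" if "p \<in> {0..<N}" "p' \<in> {0..<N}" "\<tau> p = \<tau> p'" for p p'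
  proof -
    have m1: "nat p + 1 \<in> {1..n}" "nat p' + 1 \<in> {1..n}" using that unfolding N_def by auto
    have "\<sigma> (nat p + 1) = \<sigma> (nat p' + 1)" using that(3) unfolding \<tau>_def .
    then have "nat p + 1 = nat p' + 1" using inj_onD[OF injs _ m1] by blast
    then have "nat p = nat p'" by simp
    then show ?thesis using that by (simp add: eq_nat_nat_iff)
  qed
  have \<tau>rng: "\<tau> p \<in> {1..n}" if "p \<in> {0..<N}" for p
  proof -
    have "nat p + 1 \<in> {1..n}" using that unfolding N_def by auto
    then show ?thesis using cyc unfolding cyclic_order_def bij_betw_def \<tau>_def by auto
  qed
  have mem: "\<tau> p \<in> SI y \<longleftrightarrow> (p - y) mod N < R" if "p \<in> {0..<N}" "y \<in> {0..<N}" for p y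
  proof -
    have "\<tau> p \<in> SI y \<longleftrightarrow> (\<exists>p' \<in> {0..<N}. \<tau> p = \<tau> p' \<and> (p' - y) mod N < R)"
      unfolding SI_def using si_mem[OF n0 rn, of y "\<tau> p" \<sigma>] that
      unfolding N_def R_def \<tau>_def by simp
    also have "\<dots> \<longleftrightarrow> (p - y) mod N < R" using \<tau>inj that by blast
    finally show ?thesis .
  qed
  have memq: "\<exists>p \<in> {0..<N}. q = \<tau> p" if "q \<in> SI y" "y \<in> {0..<N}" for q y
    using si_mem[OF n0 rn, of y q \<sigma>] that unfolding SI_def N_def \<tau>_def by auto
  have SIinj: "inj_on SI {0..<N}"
  proof (rule inj_onI)
    fix y y' assume y: "y \<in> {0..<N}" "y' \<in> {0..<N}" "SI y = SI y'"
    have N0: "0 < N" "R < N" "0 < R" using n0 rn r0 unfolding N_def R_def by auto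
    have "\<tau> y \<in> SI y" using mem[of y y] y N0 by simp
    then have d: "(y - y') mod N < R" using mem[of y y'] y by simp
    define z where "z = (y - 1) mod N"
    have z: "z \<in> {0..<N}" using N0 by (simp add: z_def)
    have "(z - y) mod N = (-1) mod N" unfolding z_def by (simp add: mod_diff_left_eq)
    also have "\<dots> = N - 1" using N0 by (simp add: zmod_minus1)
    finally have "\<not> \<tau> z \<in> SI y" using mem[OF z y(1)] N0 by simp
    then have "\<not> (z - y') mod N < R" using mem[OF z y(2)] y by simp
    moreover have "(z - y') mod N = ((y - y') mod N - 1) mod N" unfolding z_def
      by (simp add: mod_diff_left_eq algebra_simps)
    moreover have "0 \<le> (y - y') mod N" using N0 by simp
    ultimately have "(y - y') mod N = 0"
    proof -
      assume a: "\<not> (z - y') mod N < R" "(z - y') mod N = ((y - y') mod N - 1) mod N"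
        "0 \<le> (y - y') mod N"
      show "(y - y') mod N = 0"
      proof (rule ccontr)
        assume ne: "(y - y') mod N \<noteq> 0"
        have h1: "0 \<le> (y - y') mod N - 1" using ne a(3) by linarith
        have h2: "(y - y') mod N - 1 < N" using d N0 by linarith
        have "((y - y') mod N - 1) mod N = (y - y') mod N - 1"
          using mod_pos_pos_trivial[OF h1 h2] .
        then show False using a d by linarith
      qed
    qed
    then have "N dvd y - y'" by (simp add: mod_eq_0_iff_dvd)
    then have "y mod N = y' mod N" by (simp add: mod_eq_dvd_iff)
    then show "y = y'" using y by simp
  qed
  have SIs: "sigma_intervals n \<sigma> r = SI ` {0..<N}"
  proof (intro set_eqI iffI)
    fix I assume "I \<in> sigma_intervals n \<sigma> r"
    then obtain x where x: "x \<in> {1..n}" "I = sigma_interval n \<sigma> r x" unfolding sigma_intervals_def by blast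
    then have "I = SI (int x - 1)" "int x - 1 \<in> {0..<N}" unfolding SI_def N_def by (auto simp: nat_diff_distrib)
    then show "I \<in> SI ` {0..<N}" by blast
  next
    fix I assume "I \<in> SI ` {0..<N}"
    then obtain y where "y \<in> {0..<N}" "I = SI y" by blast
    then show "I \<in> sigma_intervals n \<sigma> r" unfolding sigma_intervals_def SI_def N_def
      by (intro CollectI exI[of _ "nat y + 1"]) auto
  qed
  define S where "S = {y \<in> {0..<N}. SI y \<in> \<F>}"
  have FS: "\<F> = SI ` S" using Fsub SIs unfolding S_def by auto
  have cS: "card S = nat R"
  proof -
    have "inj_on SI S" using SIinj by (rule inj_on_subset) (auto simp: S_def)
    then have "card \<F> = card S" using FS card_image by metis
    then show ?thesis using cF by (simp add: R_def)
  qed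
  have kw: "\<exists>p. \<forall>i<k. (p - x i) mod N < R" if xS: "\<forall>i<k. x i mod N \<in> S" for x
  proof -
    define Fs where "Fs i = SI (x i mod N)" for i
    have "\<forall>i<k. Fs i \<in> \<F>" using xS unfolding Fs_def S_def by auto
    then have "(\<Inter>i<k. Fs i) \<noteq> {}" using kwi unfolding k_wise_intersecting_def by blast
    then obtain q where q: "\<And>i. i < k \<Longrightarrow> q \<in> Fs i" by blast
    have k0: "0 < k" using k2 by simp
    have x0: "x 0 mod N \<in> {0..<N}" using xS k0 unfolding S_def by auto
    obtain p where p: "p \<in> {0..<N}" "q = \<tau> p" using memq[OF q[OF k0, unfolded Fs_def] x0] by blast
    have "(p - x i) mod N < R" if "i < k" for i
    proof -
      have xi: "x i mod N \<in> {0..<N}" using xS that unfolding S_def by auto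
      have "(p - x i mod N) mod N < R" using mem[OF p(1) xi] q[OF that] p(2) unfolding Fs_def by simp
      then show ?thesis by (simp add: mod_diff_right_eq)
    qed
    then show ?thesis by blast
  qed
  have N0: "0 < R" "R < N" using rn r0 unfolding N_def R_def by auto
  obtain p0 where p0: "S = {y \<in> {0..<N}. (p0 - y) mod N < R}"
    using core[OF N0 _ cS kG kw] unfolding S_def by blast
  define p where "p = p0 mod N"
  have p: "p \<in> {0..<N}" using N0 by (simp add: p_def)
  have pe: "(p - y) mod N = (p0 - y) mod N" for y by (simp add: p_def mod_diff_left_eq)
  show ?thesis
  proof (intro bexI[of _ "\<tau> p"] set_eqI iffI)
    show "\<tau> p \<in> {1..n}" using \<tau>rng[OF p] .
  next
    fix I assume "I \<in> \<F>"
    then obtain y where y: "y \<in> S" "I = SI y" using FS by blast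
    then have "y \<in> {0..<N}" "(p - y) mod N < R" using p0 pe by auto
    then show "I \<in> {I \<in> sigma_intervals n \<sigma> r. \<tau> p \<in> I}" using y mem[OF p] SIs by auto
  next
    fix I assume "I \<in> {I \<in> sigma_intervals n \<sigma> r. \<tau> p \<in> I}"
    then obtain y where y: "y \<in> {0..<N}" "I = SI y" "\<tau> p \<in> I" using SIs by auto
    then have "(p0 - y) mod N < R" using mem[OF p y(1)] pe by simp
    then have "y \<in> S" using p0 y by simp
    then show "I \<in> \<F>" using FS y by blast
  qed
qed


end
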